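(* Consider an $n$-th order strictly proper SISO system with transfer function \[ P(s)=\frac{y(s)}{u(s)}=\frac{b_1s^{n-1}+\dots+b_{n-1}s+b_n}{s^n+a_1s^{n-1}+\dots+a_{n-1}s+a_n}, \] with unknown coefficients $a_i\in[\underline a_i,\bar a_i]$ and $b_j\in[\underline b_j,\bar b_j]$ for $i,j=1,\dots,n$. Let $c_0=[1,0,\dots,0]$ and let $A_0\in\mathbb{R}^{n\times n}$ be a strictly stable matrix in observable canonical form with characteristic polynomial $s^n+\hat a_1s^{n-1}+\dots+\hat a_n$ (ones on the superdiagonal, first column $-[\hat a_1,\dots,\hat a_n]^T$, zeros elsewhere). Realize the system as $\dot x=A_0x+b_yy+b_uu$, $y=c_0x$, with $b_y=[\hat a_1-a_1,\dots,\hat a_n-a_n]^T$ and $b_u=[b_1,\dots,b_n]^T$. Let $\theta_y,\theta_u$ satisfy $\dot\theta_y=A_0^T\theta_y+c_0^Ty$, $\dot\theta_u=A_0^T\theta_u+c_0^Tu$; let $C_0$ be the observability matrix of $(c_0,A_0)$, $\Theta_y,\Theta_u$ the controllability matrices $[\theta,A_0^T\theta,\dots,(A_0^T)^{n-1}\theta]$ for $\theta=\theta_y,\theta_u$, and $E_y=C_0^{-1}\Theta_y^T$, $E_u=C_0^{-1}\Theta_u^T$. Define $\hat x(b_y,b_u)=E_yb_y+E_ub_u$, and let $\hat x(b_{yi},b_{ui})$, $i=1,\dots,N$, be all the vertices of the convex hull of the points $E_y[\hat a_1-a_1,\dots,\hat a_n-a_n]^T+E_u[b_1,\dots,b_n]^T$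 with $a_i\in\{\underline a_i,\bar a_i\}$, $b_j\in\{\underline b_j,\bar b_j\}$. Let $\epsilon_0=x(0)-\hat x(0)$, with $\hat x$ evaluated at the true coefficients. Let $Q_1,\dots,Q_{n_q}\succ0$, define \[ V_c(x)=\min_{\gamma}\,x^T\Big(\sum_{j=1}^{n_q}\gamma_jQ_j\Big)^{-1}x\quad\text{over }\gamma_j\ge0,\ \textstyle\sum_j\gamma_j=1, \] and $\|x\|_c=V_c(x)^{1/2}$. If for all $j=1,\dots,n_q$ \[ A_0Q_j+Q_jA_0^T+2\alpha Q_j\preceq0, \] then for every $t\ge0$ there exists $i\in\{1,\dots,N\}$ such that \[ \|x(t)\|_c\le\|\hat x(b_{yi},b_{ui})(t)\|_c+e^{-\alpha t}\|\epsilon_0\|_c. \]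
   Context: The unit level set of $V_c$ is the convex hull of the ellipsoids $\{x: x^TQ_j^{-1}x\le1\}$, so $\|\cdot\|_c$ is a norm on $\mathbb{R}^n$. $\hat x(b_{yi},b_{ui})(t)$ denotes $E_y(t)b_{yi}+E_u(t)b_{ui}$. *)

theory Defs
  imports "HOL-Analysis.Analysis"
begin

text \<open>Coordinates of R^n are the finite type 'n, enumerated by a bijection
  idx :: nat => 'n from {..<CARD('n)}; coordinate idx k is the paper's index k+1.\<close>

definition pos :: "(nat \<Rightarrow> 'n::finite) \<Rightarrow> 'n \<Rightarrow> nat" where
  "pos idx p = inv_into {..<CARD('n)} idx p"

definition obs_canon :: "(nat \<Rightarrow> 'n::finite) \<Rightarrow> real^'n \<Rightarrow> real^'n^'n" where
  "obs_canon idx ahat = (\<chi> p q. if q = idx 0 then - (ahat $ p)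
       else if pos idx q = pos idx p + 1 then 1 else 0)"

fun mpow :: "real^'n^'n \<Rightarrow> nat \<Rightarrow> real^'n^'n" where
  "mpow A 0 = mat 1"
| "mpow A (Suc k) = A ** mpow A k"

definition obs_matrix :: "(nat \<Rightarrow> 'n::finite) \<Rightarrow> real^'n \<Rightarrow> real^'n^'n \<Rightarrow> real^'n^'n" where
  "obs_matrix idx c A = (\<chi> p. c v* mpow A (pos idx p))"

text \<open>Transpose of the controllability matrix [th, A0^T th, ..., (A0^T)^(n-1) th]:
  row k is (A0^T)^k th.\<close>
definition ctrb_T :: "(nat \<Rightarrow> 'n::finite) \<Rightarrow> real^'n^'n \<Rightarrow> real^'n \<Rightarrow> real^'n^'n" where
  "ctrb_T idx A th = (\<chi> p. mpow (transpose A) (pos idx p) *v th)"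

definition pos_def_mat :: "real^'n^'n \<Rightarrow> bool" where
  "pos_def_mat Q \<longleftrightarrow> transpose Q = Q \<and> (\<forall>v. v \<noteq> 0 \<longrightarrow> v \<bullet> (Q *v v) > 0)"

definition neg_semidef_mat :: "real^'n^'n \<Rightarrow> bool" where
  "neg_semidef_mat M \<longleftrightarrow> (\<forall>v. v \<bullet> (M *v v) \<le> 0)"

definition Vc :: "nat \<Rightarrow> (nat \<Rightarrow> real^'n^'n) \<Rightarrow> real^'n \<Rightarrow> real" where
  "Vc nq Q x = Inf {x \<bullet> (matrix_inv (\<Sum>j<nq. \<gamma> j *\<^sub>R Q j) *v x) | \<gamma>.
       (\<forall>j<nq. 0 \<le> \<gamma> j) \<and> (\<Sum>j<nq. \<gamma> j) = 1}"

definition cnorm :: "nat \<Rightarrow> (nat \<Rightarrow> real^'n^'n) \<Rightarrow> real^'n \<Rightarrow> real" where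
  "cnorm nq Q x = sqrt (Vc nq Q x)"

end

theory Submission
  imports Defs
begin


lemma mv_sum: "(M::real^'n^'m) *v (\<Sum>i\<in>S. f i) = (\<Sum>i\<in>S. M *v f i)"
  by (induction S rule: infinite_finite_induct) (simp_all add: matrix_vector_right_distrib)

lemma sym_dot:
  fixes P :: "real^'n^'n"
  assumes "transpose P = P"
  shows "(P *v a) \<bullet> b = a \<bullet> (P *v b)"
proof -
  have "P *v a = a v* transpose P" by simp
  then have "P *v a = a v* P" using assms by simp
  then show ?thesis by (simp add: dot_lmul_matrix)
qed

lemma pd_inv:
  fixes P :: "real^'n^'n"
  assumes "pos_def_mat P"
  shows "P ** matrix_inv P = mat 1 \<and> matrix_inv P ** P = mat 1"
proof -
  have "\<forall>x. P *v x = 0 \<longrightarrow> x = 0"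
  proof (intro allI impI)
    fix x assume "P *v x = 0"
    then have "x \<bullet> (P *v x) = 0" by simp
    then show "x = 0" using assms unfolding pos_def_mat_def by force
  qed
  then have "\<exists>B. B ** P = mat 1" using matrix_left_invertible_ker by blast
  then have "invertible P" using invertible_left_inverse by blast
  then have "\<exists>A'. P ** A' = mat 1 \<and> A' ** P = mat 1" unfolding invertible_def by blast
  then show ?thesis unfolding matrix_inv_def by (rule someI_ex)
qed

lemma pd_inv_v:
  fixes P :: "real^'n^'n"
  assumes "pos_def_mat P"
  shows "P *v (matrix_inv P *v v) = v" "matrix_inv P *v (P *v v) = v"
  using pd_inv[OF assms] by (simp_all add: matrix_vector_mul_assoc)

lemma pd_nonneg:
  fixes P :: "real^'n^'n"
  assumes "pos_def_mat P"
  shows "0 \<le> v \<bullet> (P *v v)"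
  using assms unfolding pos_def_mat_def by (cases "v = 0") (auto intro: less_imp_le)

lemma pd_inv_nonneg:
  fixes P :: "real^'n^'n"
  assumes "pos_def_mat P"
  shows "0 \<le> x \<bullet> (matrix_inv P *v x)"
proof -
  let ?w = "matrix_inv P *v x"
  have "x = P *v ?w" using pd_inv_v[OF assms] by simp
  then have "x \<bullet> ?w = (P *v ?w) \<bullet> ?w" by simp
  also have "\<dots> = ?w \<bullet> (P *v ?w)" using assms unfolding pos_def_mat_def by (simp add: sym_dot)
  finally show ?thesis using pd_nonneg[OF assms] by simp
qed

lemma pd_inv_dot:
  fixes P :: "real^'n^'n"
  assumes "pos_def_mat P"
  shows "x \<bullet> (matrix_inv P *v w) = (matrix_inv P *v x) \<bullet> w"
proof -
  have sym: "transpose P = P" using assms unfolding pos_def_mat_def by simp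
  have "x \<bullet> (matrix_inv P *v w) = (P *v (matrix_inv P *v x)) \<bullet> (matrix_inv P *v w)"
    using pd_inv_v[OF assms] by simp
  also have "\<dots> = (matrix_inv P *v x) \<bullet> (P *v (matrix_inv P *v w))" by (simp add: sym_dot[OF sym])
  also have "\<dots> = (matrix_inv P *v x) \<bullet> w" using pd_inv_v[OF assms] by simp
  finally show ?thesis .
qed

lemma key_ineq:
  fixes P :: "real^'n^'n"
  assumes "pos_def_mat P" "l > 0"
  shows "2 * (z \<bullet> x) - l * (z \<bullet> (P *v z)) \<le> (x \<bullet> (matrix_inv P *v x)) / l"
proof -
  have sym: "transpose P = P" using assms unfolding pos_def_mat_def by simp
  let ?w = "matrix_inv P *v x"
  have Pw: "P *v ?w = x" using pd_inv_v[OF assms(1)] by simp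
  have e1: "P *v (l *\<^sub>R z - ?w) = l *\<^sub>R (P *v z) - x"
    using Pw by (simp add: matrix_vector_mult_diff_distrib matrix_vector_mult_scaleR)
  have e2: "?w \<bullet> (P *v z) = x \<bullet> z" using Pw by (metis sym_dot[OF sym])
  have "0 \<le> (l *\<^sub>R z - ?w) \<bullet> (P *v (l *\<^sub>R z - ?w))" by (rule pd_nonneg[OF assms(1)])
  also have "\<dots> = l * (l * (z \<bullet> (P *v z))) - l * (z \<bullet> x) - l * (?w \<bullet> (P *v z)) + ?w \<bullet> x"
    unfolding e1 by (simp only: inner_diff_left inner_diff_right inner_scaleR_left inner_scaleR_right inner_commute[of _ "P *v z"]) (simp add: algebra_simps)
  also have "\<dots> = l * (l * (z \<bullet> (P *v z))) - 2 * l * (z \<bullet> x) + x \<bullet> ?w"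
    unfolding e2 by (simp add: inner_commute)
  finally have "l * (2 * (z \<bullet> x) - l * (z \<bullet> (P *v z))) \<le> x \<bullet> ?w" by (simp add: algebra_simps)
  then show ?thesis using assms(2) by (simp add: field_simps mult.commute)
qed

definition smplx :: "nat \<Rightarrow> (nat \<Rightarrow> real) \<Rightarrow> bool" where
  "smplx nq \<gamma> \<longleftrightarrow> (\<forall>j<nq. 0 \<le> \<gamma> j) \<and> (\<Sum>j<nq. \<gamma> j) = 1"

definition PQ :: "nat \<Rightarrow> (nat \<Rightarrow> real^'n^'n) \<Rightarrow> (nat \<Rightarrow> real) \<Rightarrow> real^'n^'n" where
  "PQ nq Q \<gamma> = (\<Sum>j<nq. \<gamma> j *\<^sub>R Q j)"

definition WQ :: "nat \<Rightarrow> (nat \<Rightarrow> real^'n^'n) \<Rightarrow> (nat \<Rightarrow> real) \<Rightarrow> real^'n \<Rightarrow> real" where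
  "WQ nq Q \<gamma> x = x \<bullet> (matrix_inv (PQ nq Q \<gamma>) *v x)"

lemma Vc_alt: "Vc nq Q x = Inf {WQ nq Q \<gamma> x | \<gamma>. smplx nq \<gamma>}"
  by (simp add: Vc_def WQ_def PQ_def smplx_def)

lemma PQ_mv: "PQ nq Q \<gamma> *v v = (\<Sum>j<nq. \<gamma> j *\<^sub>R (Q j *v v))"
  unfolding PQ_def
  by (induction nq) (simp_all add: matrix_vector_mult_add_rdistrib scaleR_matrix_vector_assoc)

lemma PQ_pd:
  assumes Qpd: "\<forall>j<nq. pos_def_mat (Q j)" and s: "smplx nq \<gamma>"
  shows "pos_def_mat (PQ nq Q \<gamma>)"
  unfolding pos_def_mat_def
proof (intro conjI allI impI)
  have T: "\<And>j. j < nq \<Longrightarrow> transpose (Q j) = Q j" using Qpd unfolding pos_def_mat_def by blast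
  have S: "Q j $ k $ i = Q j $ i $ k" if "j < nq" for j i k
  proof -
    have "transpose (Q j) $ k $ i = Q j $ i $ k" by (simp add: transpose_def)
    then show ?thesis using T[OF that] by simp
  qed
  show "transpose (PQ nq Q \<gamma>) = PQ nq Q \<gamma>"
  proof (subst vec_eq_iff, intro allI, subst vec_eq_iff, intro allI)
    fix i k
    have "transpose (PQ nq Q \<gamma>) $ i $ k = PQ nq Q \<gamma> $ k $ i" by (simp add: transpose_def)
    also have "\<dots> = (\<Sum>j<nq. \<gamma> j * Q j $ k $ i)" unfolding PQ_def by simp
    also have "\<dots> = (\<Sum>j<nq. \<gamma> j * Q j $ i $ k)" by (rule sum.cong) (auto simp: S)
    also have "\<dots> = PQ nq Q \<gamma> $ i $ k" unfolding PQ_def by simp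
    finally show "transpose (PQ nq Q \<gamma>) $ i $ k = PQ nq Q \<gamma> $ i $ k" .
  qed
next
  fix v :: "real^'a" assume "v \<noteq> 0"
  have "v \<bullet> (PQ nq Q \<gamma> *v v) = (\<Sum>j<nq. \<gamma> j * (v \<bullet> (Q j *v v)))"
    by (simp add: PQ_mv inner_sum_right)
  moreover obtain j where j: "j < nq" "\<gamma> j > 0"
  proof -
    have "\<exists>j<nq. \<gamma> j \<noteq> 0"
    proof (rule ccontr)
      assume "\<not> (\<exists>j<nq. \<gamma> j \<noteq> 0)"
      then have "(\<Sum>j<nq. \<gamma> j) = 0" by simp
      then show False using s unfolding smplx_def by simp
    qed
    then obtain j where "j < nq" "\<gamma> j \<noteq> 0" by blast
    moreover have "\<gamma> j \<ge> 0" using s \<open>j < nq\<close> unfolding smplx_def by blast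
    ultimately show ?thesis using that by force
  qed
  moreover have "0 < \<gamma> j * (v \<bullet> (Q j *v v))"
  proof -
    have "0 < v \<bullet> (Q j *v v)" using j(1) Qpd \<open>v \<noteq> 0\<close> unfolding pos_def_mat_def by blast
    then show ?thesis using j(2) by simp
  qed
  moreover have "\<forall>i\<in>{..<nq}. 0 \<le> \<gamma> i * (v \<bullet> (Q i *v v))"
  proof
    fix i assume "i \<in> {..<nq}"
    then have "0 \<le> \<gamma> i" "0 \<le> v \<bullet> (Q i *v v)" using s Qpd pd_nonneg unfolding smplx_def by auto
    then show "0 \<le> \<gamma> i * (v \<bullet> (Q i *v v))" by simp
  qed
  ultimately show "0 < v \<bullet> (PQ nq Q \<gamma> *v v)"
    using sum_pos2[of "{..<nq}" j "\<lambda>i. \<gamma> i * (v \<bullet> (Q i *v v))"] by simp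
qed

lemma aux_l: "(a::real) > 0 \<Longrightarrow> b > 0 \<Longrightarrow> (a*a)/(a/(a+b)) + (b*b)/(1 - a/(a+b)) = (a+b)^2"
  by (simp add: field_simps power2_eq_square)

context
  fixes nq :: nat and Q :: "nat \<Rightarrow> real^'n^'n"
  assumes nq: "nq \<ge> 1" and Qpd: "\<forall>j<nq. pos_def_mat (Q j)"
begin

lemma smplx_ex: "smplx nq (\<lambda>j. if j = 0 then 1 else 0)"
  using nq unfolding smplx_def by (simp add: sum.delta)

lemma WQ_nonneg: "smplx nq \<gamma> \<Longrightarrow> 0 \<le> WQ nq Q \<gamma> x"
  unfolding WQ_def using PQ_pd[OF Qpd] pd_inv_nonneg by blast

lemma Vc_le: "smplx nq \<gamma> \<Longrightarrow> Vc nq Q x \<le> WQ nq Q \<gamma> x"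
  unfolding Vc_alt
  by (rule cInf_lower) (auto intro: WQ_nonneg simp: bdd_below_def)

lemma Vc_ge: "(\<And>\<gamma>. smplx nq \<gamma> \<Longrightarrow> c \<le> WQ nq Q \<gamma> x) \<Longrightarrow> c \<le> Vc nq Q x"
  unfolding Vc_alt
  by (rule cInf_greatest) (use smplx_ex in auto)

lemma Vc_nonneg: "0 \<le> Vc nq Q x"
  by (rule Vc_ge) (rule WQ_nonneg)

lemma Vc_approx:
  assumes "e > 0" obtains \<gamma> where "smplx nq \<gamma>" "WQ nq Q \<gamma> x < Vc nq Q x + e"
proof -
  have "\<exists>y\<in>{WQ nq Q \<gamma> x | \<gamma>. smplx nq \<gamma>}. y < Vc nq Q x + e"
    unfolding Vc_alt
    by (rule cInf_lessD) (use smplx_ex assms in auto)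
  then show ?thesis using that by blast
qed

lemma WQ_subadd:
  assumes s1: "smplx nq g1" and s2: "smplx nq g2" and l: "0 < l" "l < 1"
  shows "Vc nq Q (x + y) \<le> WQ nq Q g1 x / l + WQ nq Q g2 y / (1 - l)"
proof -
  define g where "g = (\<lambda>j. l * g1 j + (1 - l) * g2 j)"
  have s: "smplx nq g" using s1 s2 l unfolding smplx_def g_def
    by (simp add: sum.distrib sum_distrib_left[symmetric])
  let ?P = "PQ nq Q g" and ?P1 = "PQ nq Q g1" and ?P2 = "PQ nq Q g2"
  have Pv: "?P *v v = l *\<^sub>R (?P1 *v v) + (1 - l) *\<^sub>R (?P2 *v v)" for v
    unfolding PQ_mv g_def by (simp add: scaleR_add_left sum.distrib scaleR_sum_right)
  define z where "z = matrix_inv ?P *v (x + y)"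
  have Pz: "?P *v z = x + y" unfolding z_def using pd_inv_v[OF PQ_pd[OF Qpd s]] by simp
  have "WQ nq Q g (x + y) = (x + y) \<bullet> z" unfolding WQ_def z_def by simp
  also have "\<dots> = 2 * (z \<bullet> (x + y)) - z \<bullet> (?P *v z)" using Pz by (simp add: inner_commute)
  also have "\<dots> = (2 * (z \<bullet> x) - l * (z \<bullet> (?P1 *v z))) + (2 * (z \<bullet> y) - (1 - l) * (z \<bullet> (?P2 *v z)))"
    unfolding Pv by (simp add: inner_add_right algebra_simps)
  also have "\<dots> \<le> WQ nq Q g1 x / l + WQ nq Q g2 y / (1 - l)"
    unfolding WQ_def
    by (rule add_mono; rule key_ineq) (use PQ_pd[OF Qpd s1] PQ_pd[OF Qpd s2] l in auto)
  finally show ?thesis using Vc_le[OF s, of "x + y"] by linarith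
qed

lemma cnorm_triangle: "cnorm nq Q (x + y) \<le> cnorm nq Q x + cnorm nq Q y"
proof (rule field_le_epsilon)
  fix d :: real assume d: "d > 0"
  define e where "e = (d / 2)^2"
  have e: "e > 0" using d unfolding e_def by simp
  obtain g1 where g1: "smplx nq g1" "WQ nq Q g1 x < Vc nq Q x + e" using Vc_approx[OF e] by blast
  obtain g2 where g2: "smplx nq g2" "WQ nq Q g2 y < Vc nq Q y + e" using Vc_approx[OF e] by blast
  define A where "A = Vc nq Q x + e"
  define B where "B = Vc nq Q y + e"
  have A: "A > 0" and B: "B > 0" using Vc_nonneg e unfolding A_def B_def by (auto intro: add_nonneg_pos)
  define l where "l = sqrt A / (sqrt A + sqrt B)"
  have sA: "sqrt A > 0" and sB: "sqrt B > 0" using A B by auto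
  have l: "0 < l" "l < 1" unfolding l_def using sA sB
    by (auto intro!: divide_pos_pos simp del: real_sqrt_gt_0_iff simp add: divide_less_eq)
  have "Vc nq Q (x + y) \<le> WQ nq Q g1 x / l + WQ nq Q g2 y / (1 - l)"
    by (rule WQ_subadd[OF g1(1) g2(1) l])
  also have "\<dots> \<le> A / l + B / (1 - l)"
    using g1 g2 l unfolding A_def B_def by (auto intro!: add_mono divide_right_mono)
  also have "A / l + B / (1 - l) = (sqrt A + sqrt B)^2"
  proof -
    have A2: "sqrt A * sqrt A = A" and B2: "sqrt B * sqrt B = B" using A B by simp_all
    show ?thesis unfolding l_def using aux_l[OF sA sB] unfolding A2 B2 .
  qed
  finally have "sqrt (Vc nq Q (x + y)) \<le> sqrt A + sqrt B"
    using sA sB by (metis real_sqrt_le_mono real_sqrt_abs abs_of_pos add_pos_pos)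
  also have "sqrt A \<le> sqrt (Vc nq Q x) + d / 2"
    unfolding A_def e_def using sqrt_add_le_add_sqrt[OF Vc_nonneg, of "(d/2)^2" x] d by simp
  also have "sqrt B \<le> sqrt (Vc nq Q y) + d / 2"
    unfolding B_def e_def using sqrt_add_le_add_sqrt[OF Vc_nonneg, of "(d/2)^2" y] d by simp
  finally show "cnorm nq Q (x + y) \<le> cnorm nq Q x + cnorm nq Q y + d"
    unfolding cnorm_def by simp
qed

lemma Vc_scale: "Vc nq Q (c *\<^sub>R x) \<le> c^2 * Vc nq Q x"
proof (cases "c = 0")
  case True
  have "Vc nq Q 0 \<le> WQ nq Q (\<lambda>j. if j = 0 then 1 else 0) 0" by (rule Vc_le[OF smplx_ex])
  then show ?thesis using True by (simp add: WQ_def)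
next
  case False
  have "Vc nq Q (c *\<^sub>R x) / c^2 \<le> Vc nq Q x"
  proof (rule Vc_ge)
    fix g assume s: "smplx nq g"
    have "Vc nq Q (c *\<^sub>R x) \<le> WQ nq Q g (c *\<^sub>R x)" by (rule Vc_le[OF s])
    also have "\<dots> = c^2 * WQ nq Q g x" unfolding WQ_def
      by (simp add: matrix_vector_mult_scaleR power2_eq_square)
    finally show "Vc nq Q (c *\<^sub>R x) / c^2 \<le> WQ nq Q g x" using False
      by (simp add: field_simps)
  qed
  then show ?thesis using False by (simp add: field_simps)
qed

lemma cnorm_scale: "cnorm nq Q (c *\<^sub>R x) \<le> \<bar>c\<bar> * cnorm nq Q x"
proof -
  have "sqrt (Vc nq Q (c *\<^sub>R x)) \<le> sqrt (c^2 * Vc nq Q x)" using Vc_scale by simp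
  then show ?thesis unfolding cnorm_def by (simp add: real_sqrt_mult)
qed

lemma cnorm_convex: "convex_on UNIV (cnorm nq Q)"
proof (rule convex_onI)
  fix t :: real and x y :: "real^'n" assume t: "0 < t" "t < 1"
  have "cnorm nq Q ((1 - t) *\<^sub>R x + t *\<^sub>R y) \<le> cnorm nq Q ((1 - t) *\<^sub>R x) + cnorm nq Q (t *\<^sub>R y)"
    by (rule cnorm_triangle)
  also have "\<dots> \<le> (1 - t) * cnorm nq Q x + t * cnorm nq Q y"
    using cnorm_scale[of "1 - t" x] cnorm_scale[of t y] t by simp
  finally show "cnorm nq Q ((1 - t) *\<^sub>R x + t *\<^sub>R y) \<le> (1 - t) * cnorm nq Q x + t * cnorm nq Q y" .
qed simp

end


declare transpose_matrix_vector[simp del]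


declare transpose_matrix_vector[simp del]

lemma sum_mv: "(\<Sum>i\<in>S. M i :: real^'n^'m) *v v = (\<Sum>i\<in>S. M i *v v)"
  by (induction S rule: infinite_finite_induct) (simp_all add: matrix_vector_mult_add_rdistrib)

lemma mpow_comm: "M ** mpow M k = mpow M k ** M"
  by (induction k) (simp_all add: matrix_mul_assoc)

lemma mpow_Suc_v: "mpow M (Suc k) *v v = mpow M k *v (M *v v)"
  by (simp add: mpow_comm matrix_vector_mul_assoc[symmetric])

lemma mpow_Suc_v2: "mpow M (Suc k) *v v = M *v (mpow M k *v v)"
  by (simp add: matrix_vector_mul_assoc[symmetric])

lemma mpow_transpose: "mpow (transpose M) k = transpose (mpow M k)"
  by (induction k) (simp_all add: matrix_transpose_mul mpow_comm)

lemma mm_row: "((M::real^'n^'m) ** N) $ p = (\<Sum>q\<in>UNIV. M $ p $ q *\<^sub>R N $ q)"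
  by (simp add: vec_eq_iff matrix_matrix_mult_def)

lemma axis_scale: "axis i (c::real) = c *\<^sub>R axis i 1"
  by (simp add: vec_eq_iff axis_def)

definition Ev :: "(nat \<Rightarrow> 'n::finite) \<Rightarrow> nat \<Rightarrow> real^'n" where
  "Ev idx k = (if k < CARD('n) then axis (idx k) 1 else 0)"

definition Fm :: "(nat \<Rightarrow> 'n::finite) \<Rightarrow> real^'n \<Rightarrow> real^'n^'n" where
  "Fm idx ahat = (\<chi> p q. if Suc (pos idx p) < CARD('n) then (if pos idx q = Suc (pos idx p) then 1 else 0)
      else - ahat $ idx (CARD('n) - 1 - pos idx q))"

context
  fixes idx :: "nat \<Rightarrow> 'n::finite" and ahat :: "real^'n"
  assumes idx: "bij_betw idx {..<CARD('n)} UNIV"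
begin

lemma n_pos: "0 < CARD('n)" by simp

lemma pos_idx: "k < CARD('n) \<Longrightarrow> pos idx (idx k) = k"
  unfolding pos_def using idx by (simp add: bij_betw_def inv_into_f_f)

lemma idx_pos: "idx (pos idx p) = p"
  unfolding pos_def using idx by (simp add: bij_betw_def f_inv_into_f)

lemma pos_lt: "pos idx p < CARD('n)"
  unfolding pos_def using idx by (metis bij_betw_def inv_into_into lessThan_iff UNIV_I)

lemma idx_eq: "k < CARD('n) \<Longrightarrow> m < CARD('n) \<Longrightarrow> idx k = idx m \<longleftrightarrow> k = m"
  by (metis pos_idx)

lemma pos_eq: "k < CARD('n) \<Longrightarrow> pos idx q = k \<longleftrightarrow> q = idx k"
  by (metis pos_idx idx_pos)

lemma Ev0: "Ev idx 0 = axis (idx 0) 1" unfolding Ev_def by simp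

lemma Ev_comp: "j < CARD('n) \<Longrightarrow> Ev idx j $ q = (if q = idx j then 1 else 0)"
  unfolding Ev_def by (simp add: axis_def)

lemma Ev_dot: "j < CARD('n) \<Longrightarrow> Ev idx j \<bullet> v = v $ idx j"
  unfolding Ev_def by (simp add: inner_axis' )

abbreviation "A0x \<equiv> obs_canon idx ahat"
abbreviation "B0x \<equiv> transpose (obs_canon idx ahat)"

lemma B_E: "k < CARD('n) \<Longrightarrow> B0x *v Ev idx k = Ev idx (Suc k) - (ahat $ idx k) *\<^sub>R Ev idx 0"
proof -
  assume k: "k < CARD('n)"
  show ?thesis
  proof (subst vec_eq_iff, intro allI)
    fix q
    have "(B0x *v Ev idx k) $ q = A0x $ idx k $ q"
      using k unfolding Ev_def by (simp add: matrix_vector_mult_def transpose_def axis_def mult.commute[of _ "if _ then _ else _"] if_distrib sum.delta cong: if_cong)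
    also have "\<dots> = (if q = idx 0 then - ahat $ idx k else if pos idx q = Suc k then 1 else 0)"
      using k by (simp add: obs_canon_def pos_idx)
    also have "\<dots> = (Ev idx (Suc k) - (ahat $ idx k) *\<^sub>R Ev idx 0) $ q"
    proof (cases "q = idx 0")
      case True
      have "Ev idx (Suc k) $ idx 0 = 0" unfolding Ev_def using idx_eq[of "Suc k" 0]
        by (auto simp: axis_def)
      then show ?thesis using True by (simp add: Ev_comp)
    next
      case False
      have "Ev idx 0 $ q = 0" using False by (simp add: Ev_comp)
      moreover have "Ev idx (Suc k) $ q = (if pos idx q = Suc k then 1 else 0)"
        unfolding Ev_def using pos_lt[of q] idx_pos[of q] pos_idx[of "Suc k"]
        by (auto simp: axis_def)
      ultimately show ?thesis using False by simp
    qed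
    finally show "(B0x *v Ev idx k) $ q = (Ev idx (Suc k) - (ahat $ idx k) *\<^sub>R Ev idx 0) $ q" .
  qed
qed

abbreviation "uu j \<equiv> mpow B0x j *v Ev idx 0"

lemma u_rec: "j \<le> CARD('n) \<Longrightarrow> uu j = Ev idx j - (\<Sum>i<j. ahat $ idx i *\<^sub>R uu (j - 1 - i))"
proof (induction j)
  case 0
  then show ?case by simp
next
  case (Suc j)
  then have j: "j < CARD('n)" by simp
  have "uu (Suc j) = B0x *v uu j" by (rule mpow_Suc_v2)
  also have "\<dots> = B0x *v Ev idx j - (\<Sum>i<j. ahat $ idx i *\<^sub>R (B0x *v uu (j - 1 - i)))"
    using Suc j by (simp add: matrix_vector_mult_diff_distrib mv_sum matrix_vector_mult_scaleR)
  also have "(\<Sum>i<j. ahat $ idx i *\<^sub>R (B0x *v uu (j - 1 - i))) = (\<Sum>i<j. ahat $ idx i *\<^sub>R uu (j - i))"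
  proof (rule sum.cong)
    fix i assume "i \<in> {..<j}"
    then have "Suc (j - 1 - i) = j - i" by auto
    then show "ahat $ idx i *\<^sub>R (B0x *v uu (j - 1 - i)) = ahat $ idx i *\<^sub>R uu (j - i)"
      by (metis mpow_Suc_v2)
  qed simp
  also have "B0x *v Ev idx j = Ev idx (Suc j) - (ahat $ idx j) *\<^sub>R Ev idx 0" by (rule B_E[OF j])
  finally have "uu (Suc j) = Ev idx (Suc j) - ((\<Sum>i<j. ahat $ idx i *\<^sub>R uu (j - i)) + ahat $ idx j *\<^sub>R uu 0)"
    by simp
  also have "(\<Sum>i<j. ahat $ idx i *\<^sub>R uu (j - i)) + ahat $ idx j *\<^sub>R uu 0 = (\<Sum>i<Suc j. ahat $ idx i *\<^sub>R uu (Suc j - 1 - i))"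
    by simp
  finally show ?case .
qed


definition "CM = mpow B0x (CARD('n)) + (\<Sum>i<CARD('n). ahat $ idx i *\<^sub>R mpow B0x (CARD('n) - 1 - i))"

lemma CM_v: "CM *v v = mpow B0x (CARD('n)) *v v + (\<Sum>i<CARD('n). ahat $ idx i *\<^sub>R (mpow B0x (CARD('n) - 1 - i) *v v))"
  unfolding CM_def by (simp add: matrix_vector_mult_add_rdistrib sum_mv scaleR_matrix_vector_assoc)

lemma CM_E0: "CM *v Ev idx 0 = 0"
proof -
  have "uu (CARD('n)) = Ev idx (CARD('n)) - (\<Sum>i<CARD('n). ahat $ idx i *\<^sub>R uu (CARD('n) - 1 - i))"
    by (rule u_rec) simp
  moreover have "Ev idx (CARD('n)) = 0" unfolding Ev_def by simp
  ultimately show ?thesis unfolding CM_v by simp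
qed

lemma CM_B: "CM *v (B0x *v v) = B0x *v (CM *v v)"
proof -
  have "\<And>k. mpow B0x k *v (B0x *v v) = B0x *v (mpow B0x k *v v)"
    by (metis mpow_Suc_v mpow_Suc_v2)
  then show ?thesis unfolding CM_v
    by (simp add: matrix_vector_right_distrib mv_sum matrix_vector_mult_scaleR)
qed

lemma CM_E: "k < CARD('n) \<Longrightarrow> CM *v Ev idx k = 0"
proof (induction k)
  case 0
  show ?case by (rule CM_E0)
next
  case (Suc k)
  then have k: "k < CARD('n)" by simp
  have "Ev idx (Suc k) = B0x *v Ev idx k + (ahat $ idx k) *\<^sub>R Ev idx 0" using B_E[OF k] by simp
  then have "CM *v Ev idx (Suc k) = B0x *v (CM *v Ev idx k) + (ahat $ idx k) *\<^sub>R (CM *v Ev idx 0)"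
    by (simp add: matrix_vector_right_distrib matrix_vector_mult_scaleR CM_B)
  then show ?case using Suc k CM_E0 by simp
qed

lemma basis_idx: "v = (\<Sum>k<CARD('n). v $ idx k *\<^sub>R Ev idx k)"
proof -
  have "(\<Sum>k<CARD('n). v $ idx k *\<^sub>R Ev idx k) = (\<Sum>k<CARD('n). v $ idx k *\<^sub>R axis (idx k) 1)"
    unfolding Ev_def by (rule sum.cong) auto
  also have "\<dots> = (\<Sum>p\<in>UNIV. v $ p *\<^sub>R axis p 1)"
    by (rule sum.reindex_bij_betw[OF idx, where g = "\<lambda>p. v $ p *\<^sub>R axis p 1"])
  also have "\<dots> = v" using basis_expansion[of v] by (simp add: scalar_mult_eq_scaleR)
  finally show ?thesis by simp
qed

lemma CM_zero: "CM *v v = 0"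
proof -
  have "CM *v v = (\<Sum>k<CARD('n). v $ idx k *\<^sub>R (CM *v Ev idx k))"
    by (subst basis_idx) (simp add: mv_sum matrix_vector_mult_scaleR)
  also have "\<dots> = 0" using CM_E by simp
  finally show ?thesis .
qed

lemma CH: "mpow B0x (CARD('n)) *v v = - (\<Sum>i<CARD('n). ahat $ idx i *\<^sub>R (mpow B0x (CARD('n) - 1 - i) *v v))"
  using CM_zero[of v] unfolding CM_v by (simp add: add_eq_0_iff)


lemma ctrb_row: "ctrb_T idx A0x th $ p = mpow B0x (pos idx p) *v th"
  unfolding ctrb_T_def by simp

lemma F_ctrb: "ctrb_T idx A0x (B0x *v th) = Fm idx ahat ** ctrb_T idx A0x th"
proof (subst vec_eq_iff, intro allI)
  fix p
  let ?n = "CARD('n)"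
  let ?k = "pos idx p"
  have lhs: "ctrb_T idx A0x (B0x *v th) $ p = mpow B0x (Suc ?k) *v th"
    unfolding ctrb_row by (rule mpow_Suc_v[symmetric])
  have rhs: "(Fm idx ahat ** ctrb_T idx A0x th) $ p = (\<Sum>q\<in>UNIV. Fm idx ahat $ p $ q *\<^sub>R (mpow B0x (pos idx q) *v th))"
    unfolding mm_row ctrb_row by simp
  show "ctrb_T idx A0x (B0x *v th) $ p = (Fm idx ahat ** ctrb_T idx A0x th) $ p"
  proof (cases "Suc ?k < ?n")
    case True
    have "(\<Sum>q\<in>UNIV. Fm idx ahat $ p $ q *\<^sub>R (mpow B0x (pos idx q) *v th))
        = (\<Sum>q\<in>UNIV. (if q = idx (Suc ?k) then mpow B0x (Suc ?k) *v th else 0))"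
    proof (rule sum.cong)
      fix q
      show "Fm idx ahat $ p $ q *\<^sub>R (mpow B0x (pos idx q) *v th) = (if q = idx (Suc ?k) then mpow B0x (Suc ?k) *v th else 0)"
        using True pos_eq[OF True, of q] unfolding Fm_def by auto
    qed simp
    also have "\<dots> = mpow B0x (Suc ?k) *v th" by simp
    finally show ?thesis using lhs rhs by simp
  next
    case False
    then have k: "Suc ?k = ?n" using pos_lt[of p] by simp
    have "(\<Sum>q\<in>UNIV. Fm idx ahat $ p $ q *\<^sub>R (mpow B0x (pos idx q) *v th))
        = (\<Sum>q\<in>UNIV. - ahat $ idx (?n - 1 - pos idx q) *\<^sub>R (mpow B0x (pos idx q) *v th))"
      using False unfolding Fm_def by simp
    also have "\<dots> = (\<Sum>k<?n. - ahat $ idx (?n - 1 - pos idx (idx k)) *\<^sub>R (mpow B0x (pos idx (idx k)) *v th))"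
      by (rule sum.reindex_bij_betw[OF idx, symmetric])
    also have "\<dots> = (\<Sum>k<?n. - ahat $ idx (?n - 1 - k) *\<^sub>R (mpow B0x k *v th))"
      by (rule sum.cong) (simp_all add: pos_idx)
    also have "\<dots> = - (\<Sum>i<?n. ahat $ idx i *\<^sub>R (mpow B0x (?n - 1 - i) *v th))"
    proof -
      have "(\<Sum>i<?n. ahat $ idx i *\<^sub>R (mpow B0x (?n - 1 - i) *v th))
          = (\<Sum>k<?n. ahat $ idx (?n - Suc k) *\<^sub>R (mpow B0x (?n - 1 - (?n - Suc k)) *v th))"
        by (rule sum.nat_diff_reindex[symmetric])
      also have "\<dots> = (\<Sum>k<?n. ahat $ idx (?n - 1 - k) *\<^sub>R (mpow B0x k *v th))"
        by (rule sum.cong) auto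
      finally show ?thesis by (simp add: sum_negf)
    qed
    also have "\<dots> = mpow B0x ?n *v th" by (rule CH[symmetric])
    finally show ?thesis using lhs rhs k by simp
  qed
qed

abbreviation "C0x \<equiv> obs_matrix idx (axis (idx 0) 1) A0x"

lemma C0_ctrb: "ctrb_T idx A0x (Ev idx 0) = C0x"
  unfolding ctrb_T_def obs_matrix_def Ev0
  by (simp add: mpow_transpose transpose_matrix_vector)

lemma C0_A: "C0x ** A0x = Fm idx ahat ** C0x"
proof -
  have "C0x ** A0x = ctrb_T idx A0x (B0x *v Ev idx 0)"
  proof (subst vec_eq_iff, intro allI)
    fix p
    have "(C0x ** A0x) $ p = (C0x $ p) v* A0x"
      by (simp add: vec_eq_iff matrix_matrix_mult_def vector_matrix_mult_def)
    also have "\<dots> = B0x *v (mpow B0x (pos idx p) *v Ev idx 0)"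
    proof -
      have "C0x $ p = mpow B0x (pos idx p) *v Ev idx 0" using C0_ctrb ctrb_row by metis
      then show ?thesis by (simp add: transpose_matrix_vector)
    qed
    also have "\<dots> = ctrb_T idx A0x (B0x *v Ev idx 0) $ p"
      unfolding ctrb_row by (metis mpow_Suc_v mpow_Suc_v2)
    finally show "(C0x ** A0x) $ p = ctrb_T idx A0x (B0x *v Ev idx 0) $ p" .
  qed
  then show ?thesis using F_ctrb C0_ctrb by simp
qed

lemma C0_ker: "C0x *v v = 0 \<Longrightarrow> v = 0"
proof -
  assume h: "C0x *v v = 0"
  have uv: "uu k \<bullet> v = 0" if "k < CARD('n)" for k
  proof -
    have "uu k = C0x $ idx k" using C0_ctrb ctrb_row pos_idx[OF that] by metis
    then show ?thesis using h by (metis matrix_vector_mul_component zero_index)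
  qed
  have "v $ idx j = 0" if j: "j < CARD('n)" for j
  proof -
    have "Ev idx j = uu j + (\<Sum>i<j. ahat $ idx i *\<^sub>R uu (j - 1 - i))" using u_rec[of j] j by simp
    then have "Ev idx j \<bullet> v = uu j \<bullet> v + (\<Sum>i<j. ahat $ idx i * (uu (j - 1 - i) \<bullet> v))"
      by (simp add: inner_add_left inner_sum_left)
    also have "\<dots> = 0" using uv j by simp
    finally show ?thesis using Ev_dot[OF j] by simp
  qed
  then show "v = 0" by (metis idx_pos pos_lt vec_eq_iff zero_index)
qed

definition "Ci = matrix_inv C0x"

lemma Ci: "C0x ** Ci = mat 1" "Ci ** C0x = mat 1"
proof -
  have "\<exists>B. B ** C0x = mat 1" using matrix_left_invertible_ker C0_ker by blast
  then have "invertible C0x" using invertible_left_inverse by blast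
  then have "\<exists>A'. C0x ** A' = mat 1 \<and> A' ** C0x = mat 1" unfolding invertible_def by blast
  then have "C0x ** Ci = mat 1 \<and> Ci ** C0x = mat 1" unfolding Ci_def matrix_inv_def by (rule someI_ex)
  then show "C0x ** Ci = mat 1" "Ci ** C0x = mat 1" by auto
qed

lemma F_eq: "Fm idx ahat = C0x ** A0x ** Ci"
  using C0_A Ci by (metis matrix_mul_assoc matrix_mul_rid)

lemma Kmat: "ctrb_T idx A0x th *v \<beta> = (\<chi> p. transpose (mpow B0x (pos idx p)) *v \<beta>) *v th"
proof (subst vec_eq_iff, intro allI)
  fix p
  have "(ctrb_T idx A0x th *v \<beta>) $ p = (mpow B0x (pos idx p) *v th) \<bullet> \<beta>"
    by (simp add: matrix_vector_mul_component ctrb_row)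
  also have "\<dots> = (transpose (mpow B0x (pos idx p)) *v \<beta>) \<bullet> th"
    by (simp add: transpose_matrix_vector) (metis dot_lmul_matrix inner_commute)
  finally show "(ctrb_T idx A0x th *v \<beta>) $ p = ((\<chi> p. transpose (mpow B0x (pos idx p)) *v \<beta>) *v th) $ p"
    by (simp add: matrix_vector_mul_component)
qed

lemma hderiv:
  assumes "(th has_vector_derivative (B0x *v th t + axis (idx 0) c)) F"
  shows "((\<lambda>s. (Ci ** ctrb_T idx A0x (th s)) *v \<beta>) has_vector_derivative
           (A0x *v ((Ci ** ctrb_T idx A0x (th t)) *v \<beta>) + c *\<^sub>R \<beta>)) F"
proof -
  define K where "K = (\<chi> p. transpose (mpow B0x (pos idx p)) *v \<beta>)"
  have fe: "(\<lambda>s. (Ci ** ctrb_T idx A0x (th s)) *v \<beta>) = (\<lambda>s. (Ci ** K) *v th s)"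
    unfolding K_def by (simp add: Kmat matrix_vector_mul_assoc[symmetric])
  have d: "((\<lambda>s. (Ci ** K) *v th s) has_vector_derivative (Ci ** K) *v (B0x *v th t + axis (idx 0) c)) F"
    by (rule bounded_linear.has_vector_derivative[OF matrix_vector_mul_bounded_linear assms])
  have "(Ci ** K) *v (B0x *v th t + axis (idx 0) c) = Ci *v (ctrb_T idx A0x (B0x *v th t) *v \<beta>) + c *\<^sub>R (Ci *v (ctrb_T idx A0x (Ev idx 0) *v \<beta>))"
    unfolding K_def by (simp add: Kmat matrix_vector_mul_assoc[symmetric] matrix_vector_right_distrib
       axis_scale[of _ c] matrix_vector_mult_scaleR Ev0)
  also have "Ci *v (ctrb_T idx A0x (Ev idx 0) *v \<beta>) = \<beta>"
    unfolding C0_ctrb by (simp add: matrix_vector_mul_assoc Ci)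
  also have "Ci *v (ctrb_T idx A0x (B0x *v th t) *v \<beta>) = A0x *v ((Ci ** ctrb_T idx A0x (th t)) *v \<beta>)"
  proof -
    have CiC0: "\<And>X. Ci ** (C0x ** X) = X" by (simp add: matrix_mul_assoc Ci)
    have E1: "\<And>X. C0x ** A0x ** Ci ** X = C0x ** (A0x ** (Ci ** X))" by (simp add: matrix_mul_assoc)
    show ?thesis unfolding F_ctrb F_eq by (simp only: matrix_vector_mul_assoc E1 CiC0)
  qed
  finally show ?thesis using d fe by simp
qed

lemma hderiv_inv:
  assumes "(th has_vector_derivative (transpose (obs_canon idx ahat) *v th t + axis (idx 0) c)) F"
  shows "((\<lambda>s. (matrix_inv (obs_matrix idx (axis (idx 0) 1) (obs_canon idx ahat)) ** ctrb_T idx (obs_canon idx ahat) (th s)) *v \<beta>) has_vector_derivative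
           (obs_canon idx ahat *v ((matrix_inv (obs_matrix idx (axis (idx 0) 1) (obs_canon idx ahat)) ** ctrb_T idx (obs_canon idx ahat) (th t)) *v \<beta>) + c *\<^sub>R \<beta>)) F"
  using hderiv[OF assms] unfolding Ci_def .

end




lemma lmi_PQ:
  fixes A :: "real^'n^'n"
  assumes lmi: "\<forall>j<nq. neg_semidef_mat (A ** Q j + Q j ** transpose A + (2 * \<alpha>) *\<^sub>R Q j)"
    and s: "smplx nq \<gamma>"
  shows "v \<bullet> (A *v (PQ nq Q \<gamma> *v v)) + v \<bullet> (PQ nq Q \<gamma> *v (transpose A *v v)) + 2 * \<alpha> * (v \<bullet> (PQ nq Q \<gamma> *v v)) \<le> 0"
proof -
  have "v \<bullet> (A *v (PQ nq Q \<gamma> *v v)) + v \<bullet> (PQ nq Q \<gamma> *v (transpose A *v v)) + 2 * \<alpha> * (v \<bullet> (PQ nq Q \<gamma> *v v))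
     = (\<Sum>j<nq. \<gamma> j * (v \<bullet> ((A ** Q j + Q j ** transpose A + (2 * \<alpha>) *\<^sub>R Q j) *v v)))"
    unfolding PQ_mv
    by (simp add: mv_sum matrix_vector_mult_scaleR inner_sum_right matrix_vector_mult_add_rdistrib
        matrix_vector_mul_assoc[symmetric] scaleR_matrix_vector_assoc[symmetric] sum.distrib
        sum_distrib_left algebra_simps)
  also have "\<dots> \<le> 0"
  proof (rule sum_nonpos)
    fix j assume "j \<in> {..<nq}"
    then show "\<gamma> j * (v \<bullet> ((A ** Q j + Q j ** transpose A + (2 * \<alpha>) *\<^sub>R Q j) *v v)) \<le> 0"
      using lmi s unfolding smplx_def neg_semidef_mat_def by (simp add: mult_nonneg_nonpos)
  qed
  finally show ?thesis .
qed


lemma lyap: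
  fixes A P :: "real^'n^'n" and e :: "real \<Rightarrow> real^'n"
  assumes P: "pos_def_mat P"
    and lmi: "\<And>v. v \<bullet> (A *v (P *v v)) + v \<bullet> (P *v (transpose A *v v)) + 2 * \<alpha> * (v \<bullet> (P *v v)) \<le> 0"
    and de: "\<forall>t\<ge>0. (e has_vector_derivative A *v e t) (at t within {0..})"
    and t: "t \<ge> 0"
  shows "e t \<bullet> (matrix_inv P *v e t) \<le> exp (- (2 * \<alpha> * t)) * (e 0 \<bullet> (matrix_inv P *v e 0))"
proof -
  define R where "R = matrix_inv P"
  have sym: "transpose P = P" using P unfolding pos_def_mat_def by simp
  define W where "W s = e s \<bullet> (R *v e s)" for s
  define g where "g s = exp (2 * \<alpha> * s) * W s" for s
  have key: "(R *v x) \<bullet> (A *v x) \<le> - \<alpha> * (x \<bullet> (R *v x))" for x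
  proof -
    define v where "v = R *v x"
    have Pv: "P *v v = x" unfolding v_def R_def by (rule pd_inv_v[OF P])
    have "v \<bullet> (P *v (transpose A *v v)) = (P *v v) \<bullet> (transpose A *v v)" by (simp add: sym_dot[OF sym])
    also have "\<dots> = (A *v x) \<bullet> v" using Pv by (simp add: transpose_matrix_vector) (metis dot_lmul_matrix inner_commute)
    finally have "v \<bullet> (A *v x) + (A *v x) \<bullet> v + 2 * \<alpha> * (v \<bullet> x) \<le> 0" using lmi[of v] Pv by simp
    then show ?thesis unfolding v_def by (simp add: inner_commute)
  qed
  have dW: "(W has_vector_derivative 2 * ((R *v e s) \<bullet> (A *v e s))) (at s within {0..})" if s: "s \<ge> 0" for s
  proof -
    have d1: "(e has_vector_derivative A *v e s) (at s within {0..})" using de s by blast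
    have d2: "((\<lambda>s. R *v e s) has_vector_derivative R *v (A *v e s)) (at s within {0..})"
      by (rule bounded_linear.has_vector_derivative[OF matrix_vector_mul_bounded_linear d1])
    have "(W has_vector_derivative (e s \<bullet> (R *v (A *v e s)) + (A *v e s) \<bullet> (R *v e s))) (at s within {0..})"
      unfolding W_def by (rule bounded_bilinear.has_vector_derivative[OF bounded_bilinear_inner d1 d2])
    moreover have "e s \<bullet> (R *v (A *v e s)) = (R *v e s) \<bullet> (A *v e s)"
      unfolding R_def by (rule pd_inv_dot[OF P])
    ultimately show ?thesis by (simp add: inner_commute)
  qed
  have dg: "(g has_real_derivative exp (2 * \<alpha> * s) * (2 * \<alpha> * W s + 2 * ((R *v e s) \<bullet> (A *v e s)))) (at s within {0..})"
    if s: "s \<ge> 0" for s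
  proof -
    have "((\<lambda>s. exp (2 * \<alpha> * s)) has_real_derivative exp (2 * \<alpha> * s) * (2 * \<alpha>)) (at s within {0..})"
      by (auto intro!: derivative_eq_intros)
    moreover have "(W has_real_derivative 2 * ((R *v e s) \<bullet> (A *v e s))) (at s within {0..})"
      using dW[OF s] by (simp add: has_real_derivative_iff_has_vector_derivative)
    ultimately show ?thesis
      unfolding g_def by (rule DERIV_mult[THEN DERIV_cong]) (simp add: algebra_simps)
  qed
  have neg: "exp (2 * \<alpha> * s) * (2 * \<alpha> * W s + 2 * ((R *v e s) \<bullet> (A *v e s))) \<le> 0" for s
  proof -
    have "2 * \<alpha> * W s + 2 * ((R *v e s) \<bullet> (A *v e s)) \<le> 0"
      using key[of "e s"] unfolding W_def by simp
    then show ?thesis by (simp add: mult_nonneg_nonpos)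
  qed
  have "g t \<le> g 0"
  proof (rule DERIV_nonpos_imp_decreasing_open[OF t])
    fix x assume x: "0 < x" "x < t"
    have "at x within {0..} = at x" by (rule at_within_open_subset[of _ "{0<..}"]) (use x in auto)
    then show "\<exists>y. (g has_real_derivative y) (at x) \<and> y \<le> 0" using dg[of x] neg[of x] x by auto
  next
    show "continuous_on {0..t} g"
      unfolding continuous_on_eq_continuous_within
    proof
      fix x assume "x \<in> {0..t}"
      then have "continuous (at x within {0..}) g"
        using dg[of x] by (auto intro: DERIV_continuous)
      then show "continuous (at x within {0..t}) g"
        by (rule continuous_within_subset) auto
    qed
  qed
  then have "exp (2 * \<alpha> * t) * W t \<le> W 0" unfolding g_def by simp
  then have "W t \<le> W 0 / exp (2 * \<alpha> * t)" by (simp add: field_simps)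
  then show ?thesis unfolding W_def R_def by (simp add: exp_minus field_simps)
qed



lemma box_hull_aux:
  fixes lo hi :: "real^'n"
  assumes "finite F"
  shows "\<forall>w. (\<forall>p\<in>F. lo$p \<le> w$p \<and> w$p \<le> hi$p) \<and> (\<forall>p. p \<notin> F \<longrightarrow> w$p = lo$p \<or> w$p = hi$p)
     \<longrightarrow> w \<in> convex hull {(\<chi> p. if s p then hi$p else lo$p) | s. True}"
  using assms
proof (induction F rule: finite_induct)
  case empty
  show ?case
  proof (intro allI impI)
    fix w :: "real^'n"
    assume h: "(\<forall>p\<in>{}. lo$p \<le> w$p \<and> w$p \<le> hi$p) \<and> (\<forall>p. p \<notin> {} \<longrightarrow> w$p = lo$p \<or> w$p = hi$p)"
    have "w = (\<chi> p. if w$p = hi$p then hi$p else lo$p)"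
      using h by (auto simp: vec_eq_iff)
    then have "w \<in> {(\<chi> p. if s p then hi$p else lo$p) | s. True}"
      by (intro CollectI exI[of _ "\<lambda>p. w$p = hi$p"]) simp
    then show "w \<in> convex hull {(\<chi> p. if s p then hi$p else lo$p) | s. True}"
      by (rule hull_inc)
  qed
next
  case (insert p F)
  show ?case
  proof (intro allI impI)
    fix w :: "real^'n"
    assume h: "(\<forall>q\<in>insert p F. lo$q \<le> w$q \<and> w$q \<le> hi$q) \<and> (\<forall>q. q \<notin> insert p F \<longrightarrow> w$q = lo$q \<or> w$q = hi$q)"
    define w1 where "w1 = (\<chi> q. if q = p then lo$p else w$q)"
    define w2 where "w2 = (\<chi> q. if q = p then hi$p else w$q)"
    have w1: "w1 \<in> convex hull {(\<chi> p. if s p then hi$p else lo$p) | s. True}"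
      using insert.IH h insert.hyps unfolding w1_def by auto
    have w2: "w2 \<in> convex hull {(\<chi> p. if s p then hi$p else lo$p) | s. True}"
      using insert.IH h insert.hyps unfolding w2_def by auto
    have lp: "lo$p \<le> w$p" "w$p \<le> hi$p" using h by auto
    show "w \<in> convex hull {(\<chi> p. if s p then hi$p else lo$p) | s. True}"
    proof (cases "lo$p = hi$p")
      case True
      then have "w = w1" using lp unfolding w1_def by (auto simp: vec_eq_iff)
      then show ?thesis using w1 by simp
    next
      case False
      then have d: "hi$p - lo$p > 0" using lp by simp
      define t where "t = (w$p - lo$p) / (hi$p - lo$p)"
      have t: "0 \<le> t" "t \<le> 1" using lp d unfolding t_def by (auto simp: field_simps)
      have "w = (1 - t) *\<^sub>R w1 + t *\<^sub>R w2"
      proof (subst vec_eq_iff, intro allI)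
        fix q
        show "w $ q = ((1 - t) *\<^sub>R w1 + t *\<^sub>R w2) $ q"
        proof (cases "q = p")
          case True
          have "(1 - t) * lo$p + t * hi$p = lo$p + t * (hi$p - lo$p)" by (simp add: algebra_simps)
          also have "\<dots> = w$p" unfolding t_def using d by simp
          finally show ?thesis using True unfolding w1_def w2_def by simp
        next
          case False
          then show ?thesis unfolding w1_def w2_def by (simp add: algebra_simps)
        qed
      qed
      moreover have "(1 - t) *\<^sub>R w1 + t *\<^sub>R w2 \<in> convex hull {(\<chi> p. if s p then hi$p else lo$p) | s. True}"
        by (rule convexD[OF convex_convex_hull w1 w2]) (use t in auto)
      ultimately show ?thesis by simp
    qed
  qed
qed

lemma box_hull:
  fixes lo hi z :: "real^'n"
  assumes "\<forall>p. lo$p \<le> z$p \<and> z$p \<le> hi$p"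
  shows "z \<in> convex hull {(\<chi> p. if s p then hi$p else lo$p) | s. True}"
  using box_hull_aux[of UNIV lo hi] assms by simp

lemma extreme_max:
  fixes S :: "'a::euclidean_space set"
  assumes "finite S" "x \<in> convex hull S" "convex_on UNIV f"
  shows "\<exists>v. v extreme_point_of convex hull S \<and> f x \<le> f v"
proof -
  let ?K = "convex hull S"
  let ?E = "{v. v extreme_point_of ?K}"
  have cK: "compact ?K" by (rule finite_imp_compact_convex_hull[OF assms(1)])
  have K: "?K = convex hull ?E" by (rule Krein_Milman_Minkowski[OF cK convex_convex_hull])
  have ES: "?E \<subseteq> S" using extreme_point_of_convex_hull by blast
  then have fE: "finite ?E" using assms(1) finite_subset by blast
  have xE: "x \<in> convex hull ?E" using assms(2) K by simp
  then have ne: "?E \<noteq> {}" by (metis convex_hull_empty empty_iff)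
  define b where "b = Max (f ` ?E)"
  have "\<forall>y\<in>?E. f y \<le> b" unfolding b_def using fE by simp
  moreover have "convex_on (convex hull ?E) f" by (rule convex_on_subset[OF assms(3)]) (simp_all add: convex_convex_hull)
  ultimately have "f x \<le> b" using convex_on_convex_hull_bound xE by blast
  moreover have "b \<in> f ` ?E" unfolding b_def using fE ne by simp
  ultimately show ?thesis by auto
qed


theorem theorem2:
  fixes idx :: "nat \<Rightarrow> 'n::finite"
    and ahat a alo ahi b blo bhi :: "real^'n"
    and x th_y th_u :: "real \<Rightarrow> real^'n"
    and u :: "real \<Rightarrow> real"
    and nq :: nat and Q :: "nat \<Rightarrow> real^'n^'n" and \<alpha> :: real
  assumes idx: "bij_betw idx {..<CARD('n)} UNIV"
    and stable: "\<forall>z::complex. z ^ CARD('n) + (\<Sum>k<CARD('n). of_real (ahat $ idx k) * z ^ (CARD('n) - Suc k)) = 0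
                  \<longrightarrow> Re z < 0"
    and a_box: "\<forall>p. alo $ p \<le> a $ p \<and> a $ p \<le> ahi $ p"
    and b_box: "\<forall>p. blo $ p \<le> b $ p \<and> b $ p \<le> bhi $ p"
    and x_ode: "\<forall>t\<ge>0. (x has_vector_derivative
        (obs_canon idx ahat *v x t + (x t $ idx 0) *\<^sub>R (ahat - a) + u t *\<^sub>R b)) (at t within {0..})"
    and thy_ode: "\<forall>t\<ge>0. (th_y has_vector_derivative
        (transpose (obs_canon idx ahat) *v th_y t + axis (idx 0) (x t $ idx 0))) (at t within {0..})"
    and thu_ode: "\<forall>t\<ge>0. (th_u has_vector_derivative
        (transpose (obs_canon idx ahat) *v th_u t + axis (idx 0) (u t))) (at t within {0..})"
    and nq: "nq \<ge> 1"
    and Qpd: "\<forall>j<nq. pos_def_mat (Q j)"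
    and lmi: "\<forall>j<nq. neg_semidef_mat (obs_canon idx ahat ** Q j + Q j ** transpose (obs_canon idx ahat)
                 + (2 * \<alpha>) *\<^sub>R Q j)"
  shows "\<forall>t\<ge>0. \<exists>v.
     v extreme_point_of convex hull
       { let A0 = obs_canon idx ahat; C0 = obs_matrix idx (axis (idx 0) 1) A0 in
           (matrix_inv C0 ** ctrb_T idx A0 (th_y t)) *v (\<chi> p. ahat $ p - (if sa p then ahi $ p else alo $ p))
         + (matrix_inv C0 ** ctrb_T idx A0 (th_u t)) *v (\<chi> p. if sb p then bhi $ p else blo $ p)
         | sa sb. True }
     \<and> cnorm nq Q (x t) \<le> cnorm nq Q v + exp (- \<alpha> * t) *
         cnorm nq Q (let A0 = obs_canon idx ahat; C0 = obs_matrix idx (axis (idx 0) 1) A0 in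
            x 0 - ((matrix_inv C0 ** ctrb_T idx A0 (th_y 0)) *v (ahat - a)
                   + (matrix_inv C0 ** ctrb_T idx A0 (th_u 0)) *v b))"
  proof (intro allI impI)
  fix t :: real assume t: "t \<ge> 0"
  define A0 where "A0 = obs_canon idx ahat"
  define Mi where "Mi = matrix_inv (obs_matrix idx (axis (idx 0) 1) A0)"
  define hy where "hy s = (Mi ** ctrb_T idx A0 (th_y s)) *v (ahat - a)" for s
  define hu where "hu s = (Mi ** ctrb_T idx A0 (th_u s)) *v b" for s
  define e where "e s = x s - (hy s + hu s)" for s
  have de: "\<forall>s\<ge>0. (e has_vector_derivative A0 *v e s) (at s within {0..})"
  proof (intro allI impI)
    fix s :: real assume s: "s \<ge> 0"
    have dy: "(hy has_vector_derivative A0 *v hy s + (x s $ idx 0) *\<^sub>R (ahat - a)) (at s within {0..})"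
      unfolding hy_def[abs_def] A0_def Mi_def
      by (rule hderiv_inv[OF idx, where ahat=ahat]) (use thy_ode s in simp)
    have du: "(hu has_vector_derivative A0 *v hu s + u s *\<^sub>R b) (at s within {0..})"
      unfolding hu_def[abs_def] A0_def Mi_def
      by (rule hderiv_inv[OF idx, where ahat=ahat]) (use thu_ode s in simp)
    have dx: "(x has_vector_derivative A0 *v x s + (x s $ idx 0) *\<^sub>R (ahat - a) + u s *\<^sub>R b) (at s within {0..})"
      using x_ode s unfolding A0_def by simp
    have "(e has_vector_derivative (A0 *v x s + (x s $ idx 0) *\<^sub>R (ahat - a) + u s *\<^sub>R b)
              - ((A0 *v hy s + (x s $ idx 0) *\<^sub>R (ahat - a)) + (A0 *v hu s + u s *\<^sub>R b))) (at s within {0..})"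
      unfolding e_def[abs_def] by (intro has_vector_derivative_diff has_vector_derivative_add dx dy du)
    then show "(e has_vector_derivative A0 *v e s) (at s within {0..})"
      by (rule has_vector_derivative_eq_rhs) (simp add: e_def matrix_vector_mult_diff_distrib matrix_vector_right_distrib)
  qed
  have decay: "Vc nq Q (e t) \<le> exp (- (2 * \<alpha> * t)) * Vc nq Q (e 0)"
  proof -
    have "Vc nq Q (e t) / exp (- (2 * \<alpha> * t)) \<le> Vc nq Q (e 0)"
    proof (rule Vc_ge[OF nq Qpd])
      fix g assume g: "smplx nq g"
      have "WQ nq Q g (e t) \<le> exp (- (2 * \<alpha> * t)) * WQ nq Q g (e 0)"
        unfolding WQ_def
        by (rule lyap[OF PQ_pd[OF Qpd g] _ de t]) (rule lmi_PQ[OF _ g], use lmi in \<open>simp add: A0_def\<close>)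
      then have "Vc nq Q (e t) \<le> exp (- (2 * \<alpha> * t)) * WQ nq Q g (e 0)"
        using Vc_le[OF nq Qpd g, of "e t"] by linarith
      then show "Vc nq Q (e t) / exp (- (2 * \<alpha> * t)) \<le> WQ nq Q g (e 0)"
        by (simp add: field_simps)
    qed
    then show ?thesis by (simp add: field_simps)
  qed
  have cdecay: "cnorm nq Q (e t) \<le> exp (- \<alpha> * t) * cnorm nq Q (e 0)"
  proof -
    have ee: "exp (- (2 * \<alpha> * t)) = (exp (- \<alpha> * t))^2"
      by (simp add: power2_eq_square exp_add[symmetric])
    have "sqrt (Vc nq Q (e t)) \<le> sqrt ((exp (- \<alpha> * t))^2 * Vc nq Q (e 0))"
      using decay ee by simp
    also have "\<dots> = exp (- \<alpha> * t) * sqrt (Vc nq Q (e 0))"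
      by (simp add: real_sqrt_mult)
    finally show ?thesis unfolding cnorm_def .
  qed
  define Va where "Va = range (\<lambda>sa. (\<chi> p. ahat $ p - (if sa p then ahi $ p else alo $ p)) :: real^'n)"
  define Vb where "Vb = range (\<lambda>sb. (\<chi> p. if sb p then bhi $ p else blo $ p) :: real^'n)"
  define M1 where "M1 = Mi ** ctrb_T idx A0 (th_y t)"
  define M2 where "M2 = Mi ** ctrb_T idx A0 (th_u t)"
  define S where "S = {M1 *v (\<chi> p. ahat $ p - (if sa p then ahi $ p else alo $ p))
         + M2 *v (\<chi> p. if sb p then bhi $ p else blo $ p) | sa sb. True}"
  have Sfin: "finite S"
  proof -
    have "S = (\<lambda>(sa, sb). M1 *v (\<chi> p. ahat $ p - (if sa p then ahi $ p else alo $ p))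
         + M2 *v (\<chi> p. if sb p then bhi $ p else blo $ p)) ` UNIV"
      unfolding S_def by auto
    then show ?thesis by simp
  qed
  have Sp: "S = (\<lambda>v. M1 *v v) ` Va + (\<lambda>v. M2 *v v) ` Vb"
    unfolding S_def Va_def Vb_def set_plus_def by auto
  have ha: "ahat - a \<in> convex hull Va"
  proof -
    have "ahat - a \<in> convex hull {(\<chi> p. if s p then (ahat - alo)$p else (ahat - ahi)$p) | s. True}"
      by (rule box_hull) (use a_box in auto)
    moreover have "{(\<chi> p. if s p then (ahat - alo)$p else (ahat - ahi)$p) | s. True} \<subseteq> Va"
    proof
      fix w assume "w \<in> {(\<chi> p. if s p then (ahat - alo)$p else (ahat - ahi)$p) | s. True}"
      then obtain s where "w = (\<chi> p. if s p then (ahat - alo)$p else (ahat - ahi)$p)" by blast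
      then have "w = (\<lambda>sa. (\<chi> p. ahat $ p - (if sa p then ahi $ p else alo $ p))) (\<lambda>p. \<not> s p)"
        by (simp add: vec_eq_iff)
      then show "w \<in> Va" unfolding Va_def by (intro image_eqI[where x="\<lambda>p. \<not> s p"]) simp_all
    qed
    ultimately show ?thesis using hull_mono by blast
  qed
  have hb: "b \<in> convex hull Vb"
  proof -
    have "b \<in> convex hull {(\<chi> p. if s p then bhi$p else blo$p) | s. True}"
      by (rule box_hull) (use b_box in auto)
    moreover have "{(\<chi> p. if s p then bhi$p else blo$p) | s. True} = Vb" unfolding Vb_def by auto
    ultimately show ?thesis by simp
  qed
  have xh: "hy t + hu t \<in> convex hull S"
  proof -
    have "convex hull S = (\<lambda>v. M1 *v v) ` (convex hull Va) + (\<lambda>v. M2 *v v) ` (convex hull Vb)"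
      unfolding Sp convex_hull_set_plus
      by (simp add: convex_hull_linear_image[OF matrix_vector_mul_linear])
    moreover have "hy t = M1 *v (ahat - a)" "hu t = M2 *v b" unfolding hy_def hu_def M1_def M2_def by simp_all
    ultimately show ?thesis using ha hb by (auto intro: set_plus_intro)
  qed
  obtain v where v: "v extreme_point_of convex hull S" "cnorm nq Q (hy t + hu t) \<le> cnorm nq Q v"
    using extreme_max[OF Sfin xh cnorm_convex[OF nq Qpd]] by blast
  have "cnorm nq Q (x t) = cnorm nq Q ((hy t + hu t) + e t)" unfolding e_def by simp
  also have "\<dots> \<le> cnorm nq Q (hy t + hu t) + cnorm nq Q (e t)" by (rule cnorm_triangle[OF nq Qpd])
  also have "\<dots> \<le> cnorm nq Q v + exp (- \<alpha> * t) * cnorm nq Q (e 0)" using v(2) cdecay by simp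
  finally have fin: "cnorm nq Q (x t) \<le> cnorm nq Q v + exp (- \<alpha> * t) * cnorm nq Q (e 0)" .
  show "\<exists>v. v extreme_point_of convex hull
       { let A0 = obs_canon idx ahat; C0 = obs_matrix idx (axis (idx 0) 1) A0 in
           (matrix_inv C0 ** ctrb_T idx A0 (th_y t)) *v (\<chi> p. ahat $ p - (if sa p then ahi $ p else alo $ p))
         + (matrix_inv C0 ** ctrb_T idx A0 (th_u t)) *v (\<chi> p. if sb p then bhi $ p else blo $ p)
         | sa sb. True }
     \<and> cnorm nq Q (x t) \<le> cnorm nq Q v + exp (- \<alpha> * t) *
         cnorm nq Q (let A0 = obs_canon idx ahat; C0 = obs_matrix idx (axis (idx 0) 1) A0 in
            x 0 - ((matrix_inv C0 ** ctrb_T idx A0 (th_y 0)) *v (ahat - a)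
                   + (matrix_inv C0 ** ctrb_T idx A0 (th_u 0)) *v b))"
    using v(1) fin unfolding Let_def S_def M1_def M2_def Mi_def A0_def e_def hy_def hu_def by blast
qed

end
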